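(* If a language $\mathcal L\subseteq\mathcal A^*$ satisfies RBC, then it has eventually constant growth: there are $N_0,K$ such that $p(n+1)-p(n)=K$ for all $n\ge N_0$.
   Context: $\mathcal{A}$ finite alphabet, $\mathcal{A}^*$ nonempty finite words. A language is a set $\mathcal L\subseteq\mathcal A^*$ with $\mathcal A\subseteq\mathcal L$, closed under subwords, and such that each $w\in\mathcal L$ has $a,b\in\mathcal A$ with $awb\in\mathcal L$. $p(n)$ is the number of words of length $n$ in $\mathcal L$. $Ex^\ell(w)=\{a: aw\in\mathcal L\}$, $Ex^r(w)=\{b: wb\in\mathcal L\}$; left special if $|Ex^\ell(w)|\ge2$, right special if $|Ex^r(w)|\ge 2$, bispecial if both. A bispecial $w$ is regular bispecial if there is exactly one $\hat a\in Ex^\ell(w)$ with $\hat aw$ right special and exactly one $\hat b\in Ex^r(w)$ with $w\hat b$ left special. RBC: there is $n_0$ such that every bispecial word of length $\ge n_0$ is regular bispecial. *)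

theory Defs
  imports Main "HOL-Library.Sublist"
begin

text \<open>Words over a finite alphabet (the type 'a, class finite) are lists;
  nonempty words are the nonempty lists. A subword is a factor (contiguous).\<close>

definition is_language :: "'a::finite list set \<Rightarrow> bool" where
  "is_language L \<longleftrightarrow>
     [] \<notin> L \<and>
     (\<forall>a. [a] \<in> L) \<and>
     (\<forall>w\<in>L. \<forall>v. v \<noteq> [] \<and> sublist v w \<longrightarrow> v \<in> L) \<and>
     (\<forall>w\<in>L. \<exists>a b. [a] @ w @ [b] \<in> L)"

definition complexity :: "'a list set \<Rightarrow> nat \<Rightarrow> nat" where
  "complexity L n = card {w \<in> L. length w = n}"

definition ext_left :: "'a list set \<Rightarrow> 'a list \<Rightarrow> 'a set" where
  "ext_left L w = {a. a # w \<in> L}"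

definition ext_right :: "'a list set \<Rightarrow> 'a list \<Rightarrow> 'a set" where
  "ext_right L w = {b. w @ [b] \<in> L}"

definition left_special :: "'a list set \<Rightarrow> 'a list \<Rightarrow> bool" where
  "left_special L w \<longleftrightarrow> w \<in> L \<and> card (ext_left L w) \<ge> 2"

definition right_special :: "'a list set \<Rightarrow> 'a list \<Rightarrow> bool" where
  "right_special L w \<longleftrightarrow> w \<in> L \<and> card (ext_right L w) \<ge> 2"

definition bispecial :: "'a list set \<Rightarrow> 'a list \<Rightarrow> bool" where
  "bispecial L w \<longleftrightarrow> left_special L w \<and> right_special L w"

definition regular_bispecial :: "'a list set \<Rightarrow> 'a list \<Rightarrow> bool" where
  "regular_bispecial L w \<longleftrightarrow> bispecial L w \<and>
     (\<exists>!a. a \<in> ext_left L w \<and> right_special L (a # w)) \<and>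
     (\<exists>!b. b \<in> ext_right L w \<and> left_special L (w @ [b]))"

definition RBC :: "'a list set \<Rightarrow> bool" where
  "RBC L \<longleftrightarrow> (\<exists>n0. \<forall>w. bispecial L w \<and> length w \<ge> n0 \<longrightarrow> regular_bispecial L w)"

end

theory Submission
  imports Defs
begin

lemma sub1: "sublist (w@[b]) (a#w@[b])" unfolding sublist_def by (rule exI[of _ "[a]"], rule exI[of _ "[]"]) simp
lemma sub2: "sublist (a#w) (a#w@[b])" unfolding sublist_def by (rule exI[of _ "[]"], rule exI[of _ "[b]"]) simp
lemma sub3: "sublist w (a#w)" unfolding sublist_def by (rule exI[of _ "[a]"], rule exI[of _ "[]"]) simp
lemma sub4: "sublist (butlast u) u" by (simp add: prefix_order.dual_order.refl sublist_order.dual_order.refl)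

definition Ln :: "'a list set \<Rightarrow> nat \<Rightarrow> 'a list set" where
  "Ln L n = {w \<in> L. length w = n}"

definition rr :: "'a list set \<Rightarrow> 'a list \<Rightarrow> nat" where
  "rr L u = card (ext_right L u) - 1"

definition ss :: "'a list set \<Rightarrow> nat \<Rightarrow> nat" where
  "ss L n = (\<Sum>w\<in>Ln L n. rr L w)"

lemma finite_Ln: "finite (Ln (L::'a::finite list set) n)"
proof -
  have "Ln L n \<subseteq> {xs. set xs \<subseteq> UNIV \<and> length xs = n}" by (auto simp: Ln_def)
  moreover have "finite {xs::'a list. set xs \<subseteq> UNIV \<and> length xs = n}"
    by (rule finite_lists_length_eq) simp
  ultimately show ?thesis by (rule finite_subset)
qed

lemma lang_sub:
  assumes "is_language L" "w \<in> L" "v \<noteq> []" "sublist v w"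
  shows "v \<in> L"
  using assms unfolding is_language_def by blast

lemma lang_ext:
  assumes "is_language L" "w \<in> L"
  shows "\<exists>a b. a # w @ [b] \<in> L"
  using assms unfolding is_language_def by auto

lemma ext_right_ne:
  assumes "is_language L" "w \<in> L"
  shows "ext_right L w \<noteq> {}"
proof -
  obtain a b where h: "a # w @ [b] \<in> L" using lang_ext[OF assms] by blast
  have "sublist (w @ [b]) (a # w @ [b])" by (rule sub1)
  then have "w @ [b] \<in> L" using lang_sub[OF assms(1) h] by simp
  then show ?thesis by (auto simp: ext_right_def)
qed

lemma ext_left_ne:
  assumes "is_language L" "w \<in> L"
  shows "ext_left L w \<noteq> {}"
proof -
  obtain a b where h: "a # w @ [b] \<in> L" using lang_ext[OF assms] by blast
  have "sublist (a # w) (a # w @ [b])" by (rule sub2)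
  then have "a # w \<in> L" using lang_sub[OF assms(1) h] by simp
  then show ?thesis by (auto simp: ext_left_def)
qed

lemma ext_right_sub:
  assumes "is_language L"
  shows "ext_right L (a # w) \<subseteq> ext_right L w"
proof
  fix b assume "b \<in> ext_right L (a # w)"
  then have h: "a # w @ [b] \<in> L" by (simp add: ext_right_def)
  have "sublist (w @ [b]) (a # w @ [b])" by (rule sub1)
  then have "w @ [b] \<in> L" using lang_sub[OF assms h] by simp
  then show "b \<in> ext_right L w" by (simp add: ext_right_def)
qed

lemma card_ext_right_pos:
  assumes "is_language L" "w \<in> L"
  shows "card (ext_right L (w::'a::finite list)) \<ge> 1"
  using ext_right_ne[OF assms] by (simp add: Suc_le_eq card_gt_0_iff)

lemma p_suc:
  fixes L :: "'a::finite list set"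
  assumes "is_language L" "n \<ge> 1"
  shows "complexity L (Suc n) = (\<Sum>w\<in>Ln L n. card (ext_right L w))"
proof -
  let ?S = "SIGMA w:Ln L n. ext_right L w"
  let ?h = "\<lambda>(w,b). w @ [b]"
  have inj: "inj_on ?h ?S" by (auto simp: inj_on_def)
  have img: "?h ` ?S = {u \<in> L. length u = Suc n}"
  proof
    show "?h ` ?S \<subseteq> {u \<in> L. length u = Suc n}"
      by (auto simp: Ln_def ext_right_def)
  next
    show "{u \<in> L. length u = Suc n} \<subseteq> ?h ` ?S"
    proof
      fix u assume u: "u \<in> {u \<in> L. length u = Suc n}"
      then have ne: "u \<noteq> []" by auto
      have eq: "u = butlast u @ [last u]" using ne by simp
      have bl: "butlast u \<noteq> []" using u assms(2) by (cases u rule: rev_cases) auto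
      have "sublist (butlast u) u" by (rule sub4)
      then have "butlast u \<in> L" using lang_sub[OF assms(1) _ bl] u by auto
      moreover have "length (butlast u) = n" using u by simp
      moreover have "last u \<in> ext_right L (butlast u)" using u eq
        by (auto simp: ext_right_def)
      ultimately have "(butlast u, last u) \<in> ?S" by (auto simp: Ln_def)
      then show "u \<in> ?h ` ?S" using eq by force
    qed
  qed
  have "complexity L (Suc n) = card (?h ` ?S)" by (simp add: img complexity_def)
  also have "\<dots> = card ?S" using inj by (rule card_image)
  also have "\<dots> = (\<Sum>w\<in>Ln L n. card (ext_right L w))"
    by (rule card_SigmaI) (auto simp: finite_Ln)
  finally show ?thesis .
qed

lemma diff_eq:
  fixes L :: "'a::finite list set"
  assumes "is_language L" "n \<ge> 1"
  shows "int (complexity L (Suc n)) - int (complexity L n) = int (ss L n)"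
proof -
  have "complexity L (Suc n) = (\<Sum>w\<in>Ln L n. rr L w + 1)"
    unfolding p_suc[OF assms]
    apply (rule sum.cong, simp)
    using card_ext_right_pos[OF assms(1)] by (auto simp: rr_def Ln_def Suc_le_eq)
  also have "\<dots> = ss L n + complexity L n"
    unfolding ss_def complexity_def Ln_def[symmetric] by (simp add: sum_Suc)
  finally show ?thesis by simp
qed

lemma s_suc:
  fixes L :: "'a::finite list set"
  assumes "is_language L" "n \<ge> 1"
  shows "ss L (Suc n) = (\<Sum>w\<in>Ln L n. \<Sum>a\<in>ext_left L w. rr L (a # w))"
proof -
  let ?S = "SIGMA w:Ln L n. ext_left L w"
  let ?h = "\<lambda>(w,a). a # w"
  have inj: "inj_on ?h ?S" by (auto simp: inj_on_def)
  have img: "?h ` ?S = Ln L (Suc n)"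
  proof
    show "?h ` ?S \<subseteq> Ln L (Suc n)"
      by (auto simp: Ln_def ext_left_def)
  next
    show "Ln L (Suc n) \<subseteq> ?h ` ?S"
    proof
      fix u assume u: "u \<in> Ln L (Suc n)"
      then obtain a w where eq: "u = a # w" by (cases u) (auto simp: Ln_def)
      show "u \<in> ?h ` ?S"
      proof (cases "w = []")
        case True
        then have "n = 0" using u eq by (simp add: Ln_def)
        then show ?thesis using assms(2) by simp
      next
        case False
        have "sublist w u" using eq by (simp add: sub3)
        then have "w \<in> L" using lang_sub[OF assms(1) _ False] u by (auto simp: Ln_def)
        then have "(w, a) \<in> ?S" using u eq by (auto simp: Ln_def ext_left_def)
        then show ?thesis using eq by force
      qed
    qed
  qed
  have "ss L (Suc n) = sum (rr L) (?h ` ?S)" by (simp add: img ss_def)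
  also have "\<dots> = sum (rr L \<circ> ?h) ?S" using inj by (rule sum.reindex)
  also have "\<dots> = (\<Sum>w\<in>Ln L n. \<Sum>a\<in>ext_left L w. rr L (a # w))"
    by (subst sum.Sigma) (auto simp: finite_Ln split_def)
  finally show ?thesis .
qed

lemma rr_zero:
  assumes "a # w \<in> L" "\<not> right_special L (a # w)"
  shows "rr L (a # w) = 0"
  using assms by (simp add: rr_def right_special_def)

lemma per_w:
  fixes L :: "'a::finite list set"
  assumes lang: "is_language L" and w: "w \<in> L"
    and uq: "\<And>a a'. a \<in> ext_left L w \<Longrightarrow> right_special L (a#w) \<Longrightarrow>
                a' \<in> ext_left L w \<Longrightarrow> right_special L (a'#w) \<Longrightarrow> a = a'"
  shows "(\<Sum>a\<in>ext_left L w. rr L (a#w)) \<le> rr L w"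
proof (cases "\<exists>a\<in>ext_left L w. right_special L (a#w)")
  case False
  have "(\<Sum>a\<in>ext_left L w. rr L (a#w)) = 0"
    using False by (auto intro!: sum.neutral rr_zero simp: ext_left_def)
  then show ?thesis by simp
next
  case True
  then obtain a0 where a0: "a0 \<in> ext_left L w" "right_special L (a0#w)" by blast
  have fin: "finite (ext_left L w)" by simp
  have "(\<Sum>a\<in>ext_left L w. rr L (a#w)) = rr L (a0#w) + (\<Sum>a\<in>ext_left L w - {a0}. rr L (a#w))"
    using sum.remove[OF fin a0(1)] by simp
  also have "(\<Sum>a\<in>ext_left L w - {a0}. rr L (a#w)) = 0"
  proof (rule sum.neutral, rule ballI)
    fix a assume a: "a \<in> ext_left L w - {a0}"
    then have "\<not> right_special L (a#w)" using uq[OF _ _ a0] by blast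
    then show "rr L (a#w) = 0" using a by (intro rr_zero) (auto simp: ext_left_def)
  qed
  also have "rr L (a0#w) \<le> rr L w"
    unfolding rr_def using card_mono[OF _ ext_right_sub[OF lang]] by (simp add: diff_le_mono)
  finally show ?thesis by simp
qed

lemma uniq:
  fixes L :: "'a::finite list set"
  assumes lang: "is_language L" and w: "w \<in> L"
    and rbc: "\<forall>w. bispecial L w \<and> length w \<ge> n0 \<longrightarrow> regular_bispecial L w"
    and len: "length w \<ge> n0"
    and a: "a \<in> ext_left L w" "right_special L (a#w)"
    and a': "a' \<in> ext_left L w" "right_special L (a'#w)"
  shows "a = a'"
proof (cases "left_special L w")
  case False
  then have "card (ext_left L w) \<le> Suc 0" using w by (simp add: left_special_def)
  then show ?thesis using a(1) a'(1) by (simp add: card_le_Suc0_iff_eq)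
next
  case ls: True
  show ?thesis
  proof (cases "right_special L w")
    case False
    have "card (ext_right L (a#w)) \<le> card (ext_right L w)"
      by (rule card_mono[OF _ ext_right_sub[OF lang]]) simp
    then show ?thesis using False a(2) w by (simp add: right_special_def)
  next
    case True
    then have "regular_bispecial L w" using rbc ls len by (simp add: bispecial_def)
    then have "\<exists>!a. a \<in> ext_left L w \<and> right_special L (a # w)"
      by (simp add: regular_bispecial_def)
    then show ?thesis using a a' by blast
  qed
qed

lemma eventually_const:
  fixes s :: "nat \<Rightarrow> nat"
  assumes "\<And>n. n \<ge> N1 \<Longrightarrow> s (Suc n) \<le> s n"
  shows "\<exists>N. \<forall>n\<ge>N. s n = s N"
proof -
  define v where "v = (LEAST v. \<exists>n\<ge>N1. s n = v)"
  have "\<exists>n\<ge>N1. s n = v" unfolding v_def by (rule LeastI[of _ "s N1"]) auto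
  then obtain N where N: "N \<ge> N1" "s N = v" by blast
  have mono: "s n \<le> s N" if "n \<ge> N" for n
    using that
  proof (induction n rule: dec_induct)
    case base then show ?case by simp
  next
    case (step m) then show ?case using assms[of m] N(1) by simp
  qed
  have "s n \<ge> v" if "n \<ge> N" for n
    unfolding v_def using that N(1) by (intro Least_le exI[of _ n]) simp
  then show ?thesis using mono N(2) by (intro exI[of _ N]) (auto intro: antisym)
qed

theorem mainTheorem3:
  fixes L :: "'a::finite list set"
  assumes "is_language L" and "RBC L"
  shows "\<exists>N0 (K::int). \<forall>n\<ge>N0.
           int (complexity L (Suc n)) - int (complexity L n) = K"
proof -
  obtain n0 where rbc: "\<forall>w. bispecial L w \<and> length w \<ge> n0 \<longrightarrow> regular_bispecial L w"
    using assms(2) by (auto simp: RBC_def)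
  define N1 where "N1 = max n0 1"
  have dec: "ss L (Suc n) \<le> ss L n" if "n \<ge> N1" for n
  proof -
    have n1: "n \<ge> 1" using that by (simp add: N1_def)
    have "ss L (Suc n) = (\<Sum>w\<in>Ln L n. \<Sum>a\<in>ext_left L w. rr L (a # w))"
      by (rule s_suc[OF assms(1) n1])
    also have "\<dots> \<le> (\<Sum>w\<in>Ln L n. rr L w)"
    proof (rule sum_mono)
      fix w assume w: "w \<in> Ln L n"
      then have wL: "w \<in> L" and lw: "length w \<ge> n0" using that by (auto simp: Ln_def N1_def)
      show "(\<Sum>a\<in>ext_left L w. rr L (a # w)) \<le> rr L w"
        by (rule per_w[OF assms(1) wL], rule uniq[OF assms(1) wL rbc lw])
    qed
    finally show ?thesis by (simp add: ss_def)
  qed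
  have ex: "\<exists>N. \<forall>n\<ge>N. ss L n = ss L N"
    by (rule eventually_const[of N1]) (rule dec)
  define N where "N = (SOME N. \<forall>n\<ge>N. ss L n = ss L N)"
  have N: "\<forall>n\<ge>N. ss L n = ss L N"
    unfolding N_def by (rule someI_ex[OF ex])
  show ?thesis
  proof (rule exI[of _ "max N 1"], rule exI[of _ "int (ss L N)"], intro allI impI)
    fix n assume n: "n \<ge> max N 1"
    have n1: "n \<ge> 1" using n by simp
    have "n \<ge> N" using n by simp
    then have e: "ss L n = ss L N" using N by blast
    show "int (complexity L (Suc n)) - int (complexity L n) = int (ss L N)"
      using diff_eq[OF assms(1) n1] e by simp
  qed
qed

end
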